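(* Let $p$ be a prime, $k\ge0$ an integer and $n\ge1$ an integer, with $n>1$ if $p=2$. Then (1) $P(p,p^k(p^n-1))=p^k(p^n-1)$; (2) $P(p,p^k(p^n+1))=p^k(p^{2n}-1)$.
   Context: For positive integers $m,N$, let $\mathbf{Z}_m$ be the integers modulo $m$ and $T:\mathbf{Z}_m^N\to\mathbf{Z}_m^N$, $T(a_0,\dots,a_{N-1})=(a_0+a_1,a_1+a_2,\dots,a_{N-1}+a_0)$. For $\mathbf{a}\in\mathbf{Z}_m^N$ the cycle length of $(T^j\mathbf{a})_{j\ge0}$ is the smallest positive integer $P$ such that there is $M$ with $T^{j+P}\mathbf{a}=T^j\mathbf{a}$ for all $j\ge M$. $P(m,N)$ denotes the maximum of these cycle lengths over all $\mathbf{a}\in\mathbf{Z}_m^N$. *)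

theory Defs
  imports "HOL-Computational_Algebra.Primes"
begin

definition vecs :: "nat \<Rightarrow> nat \<Rightarrow> (nat \<Rightarrow> nat) set" where
  "vecs m N = {a. \<forall>i. (i < N \<longrightarrow> a i < m) \<and> (N \<le> i \<longrightarrow> a i = 0)}"

definition Tmap :: "nat \<Rightarrow> nat \<Rightarrow> (nat \<Rightarrow> nat) \<Rightarrow> (nat \<Rightarrow> nat)" where
  "Tmap m N a = (\<lambda>i. if i < N then (a i + a (Suc i mod N)) mod m else 0)"

definition cycle_length :: "nat \<Rightarrow> nat \<Rightarrow> (nat \<Rightarrow> nat) \<Rightarrow> nat" where
  "cycle_length m N a =
     (LEAST P. 0 < P \<and> (\<exists>M. \<forall>j\<ge>M. (Tmap m N ^^ (j + P)) a = (Tmap m N ^^ j) a))"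

definition Pmax :: "nat \<Rightarrow> nat \<Rightarrow> nat" where
  "Pmax m N = Max (cycle_length m N ` vecs m N)"

end

theory Submission
  imports Defs "Berlekamp_Zassenhaus.Poly_Mod"
begin

definition eqm :: "int \<Rightarrow> int poly \<Rightarrow> int poly \<Rightarrow> bool" where
  "eqm m f g \<longleftrightarrow> (\<exists>r. f = g + smult m r)"

definition pdv :: "int \<Rightarrow> int poly \<Rightarrow> int poly \<Rightarrow> bool" where
  "pdv m a b \<longleftrightarrow> (\<exists>q r. b = q * a + smult m r)"

lemma eqm_refl[simp]: "eqm m f f"
  unfolding eqm_def by (rule exI[of _ 0]) simp

lemma eqm_sym: "eqm m f g \<Longrightarrow> eqm m g f"
  unfolding eqm_def by (metis add_diff_cancel_right' diff_add_cancel smult_minus_right minus_add_cancel add.commute diff_conv_add_uminus)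

lemma eqm_trans: "eqm m f g \<Longrightarrow> eqm m g h \<Longrightarrow> eqm m f h"
  unfolding eqm_def by (metis add.assoc smult_add_right)

lemma eqm_add: "eqm m f g \<Longrightarrow> eqm m f' g' \<Longrightarrow> eqm m (f + f') (g + g')"
  unfolding eqm_def by (metis (no_types, lifting) add.assoc add.left_commute smult_add_right)

lemma eqm_diff: "eqm m f g \<Longrightarrow> eqm m f' g' \<Longrightarrow> eqm m (f - f') (g - g')"
  unfolding eqm_def
proof (elim exE)
  fix r r' assume "f = g + smult m r" "f' = g' + smult m r'"
  then show "\<exists>r. f - f' = g - g' + smult m r"
    by (intro exI[of _ "r - r'"]) (simp add: smult_diff_right algebra_simps)
qed

lemma eqm_mult: "eqm m f g \<Longrightarrow> eqm m f' g' \<Longrightarrow> eqm m (f * f') (g * g')"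
  unfolding eqm_def
proof (elim exE)
  fix r r' assume "f = g + smult m r" "f' = g' + smult m r'"
  then show "\<exists>r. f * f' = g * g' + smult m r"
    by (intro exI[of _ "g * r' + r * g' + smult m (r * r')"]) (simp add: algebra_simps smult_add_right)
qed

lemma eqm_power: "eqm m f g \<Longrightarrow> eqm m (f ^ n) (g ^ n)"
  by (induction n) (auto intro: eqm_mult)

lemma eqm_smult_m: "eqm m (f + smult m r) f"
  unfolding eqm_def by auto

lemma eqm_iff_diff: "eqm m f g \<longleftrightarrow> (\<exists>r. f - g = smult m r)"
  unfolding eqm_def by (metis add_diff_cancel_left' diff_add_cancel add.commute)

lemma pdv_0[simp]: "pdv m a 0"
  unfolding pdv_def by (intro exI[of _ 0]) simp

lemma pdv_self[simp]: "pdv m a a"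
  unfolding pdv_def by (intro exI[of _ 1] exI[of _ 0]) simp

lemma pdv_dvd: "a dvd b \<Longrightarrow> pdv m a b"
  unfolding pdv_def by (metis add.right_neutral dvdE mult.commute smult_0_right)

lemma pdv_add: "pdv m a b \<Longrightarrow> pdv m a c \<Longrightarrow> pdv m a (b + c)"
  unfolding pdv_def
proof (elim exE)
  fix q r q' r' assume "b = q * a + smult m r" "c = q' * a + smult m r'"
  then show "\<exists>q r. b + c = q * a + smult m r"
    by (intro exI[of _ "q + q'"] exI[of _ "r + r'"]) (simp add: algebra_simps smult_add_right)
qed

lemma pdv_uminus: "pdv m a b \<Longrightarrow> pdv m a (- b)"
  unfolding pdv_def
proof (elim exE)
  fix q r assume "b = q * a + smult m r"
  then show "\<exists>q r. - b = q * a + smult m r"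
    by (intro exI[of _ "- q"] exI[of _ "- r"]) simp
qed

lemma pdv_diff: "pdv m a b \<Longrightarrow> pdv m a c \<Longrightarrow> pdv m a (b - c)"
  using pdv_add[of m a b "- c"] pdv_uminus by simp

lemma pdv_mult_right: "pdv m a b \<Longrightarrow> pdv m a (b * c)"
  unfolding pdv_def
proof (elim exE)
  fix q r assume "b = q * a + smult m r"
  then show "\<exists>q r. b * c = q * a + smult m r"
    by (intro exI[of _ "q * c"] exI[of _ "r * c"]) (simp add: algebra_simps)
qed

lemma pdv_mult_left: "pdv m a b \<Longrightarrow> pdv m a (c * b)"
  using pdv_mult_right[of m a b c] by (simp add: mult.commute)

lemma pdv_trans: "pdv m a b \<Longrightarrow> pdv m b c \<Longrightarrow> pdv m a c"
  unfolding pdv_def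
proof (elim exE)
  fix q r q' r' assume "b = q * a + smult m r" "c = q' * b + smult m r'"
  then show "\<exists>q r. c = q * a + smult m r"
    by (intro exI[of _ "q' * q"] exI[of _ "q' * r + r'"]) (simp add: algebra_simps smult_add_right)
qed

lemma pdv_smult_m[simp]: "pdv m a (smult m r)"
  unfolding pdv_def by (intro exI[of _ 0] exI[of _ r]) simp

lemma pdv_eqm: "eqm m b c \<Longrightarrow> pdv m a b \<Longrightarrow> pdv m a c"
  unfolding eqm_iff_diff
proof (elim exE)
  fix r assume "b - c = smult m r" "pdv m a b"
  then have "c = b - smult m r" by simp
  then show "pdv m a c" using \<open>pdv m a b\<close> by (simp add: pdv_diff)
qed

lemma pdv_eqm_left: "eqm m a a' \<Longrightarrow> pdv m a b \<Longrightarrow> pdv m a' b"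
  unfolding eqm_def pdv_def
proof (elim exE)
  fix r q r' assume "a = a' + smult m r" "b = q * a + smult m r'"
  then show "\<exists>q r. b = q * a' + smult m r"
    by (intro exI[of _ q] exI[of _ "q * r + r'"]) (simp add: algebra_simps smult_add_right)
qed

lemma pdv_mult_both: "pdv m a b \<Longrightarrow> pdv m (a * c) (b * c)"
  unfolding pdv_def
proof (elim exE)
  fix q r assume "b = q * a + smult m r"
  then show "\<exists>q r. b * c = q * (a * c) + smult m r"
    by (intro exI[of _ q] exI[of _ "r * c"]) (simp add: algebra_simps)
qed

lemma diff_dvd_power_diff: "(a - b :: 'a :: comm_ring_1) dvd a ^ n - b ^ n"
proof (induction n)
  case 0 then show ?case by simp
next
  case (Suc n)
  have "a ^ Suc n - b ^ Suc n = a * (a ^ n - b ^ n) + (a - b) * b ^ n"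
    by (simp add: algebra_simps)
  then show ?case using Suc by (metis dvd_add dvd_mult dvd_triv_left)
qed

lemma pdv_power_diff: "pdv m h (a - b) \<Longrightarrow> pdv m h (a ^ n - b ^ n)"
  by (metis pdv_dvd pdv_trans diff_dvd_power_diff)

lemma pdv_eqm_diff: "eqm m a b \<Longrightarrow> pdv m h (a - b)"
  unfolding eqm_iff_diff by auto

lemma pdv_cancel_unit:
  assumes "pdv m h (a * u - 1)" "pdv m h (a * z)"
  shows "pdv m h z"
proof -
  have "z = u * (a * z) - z * (a * u - 1)" by (simp add: algebra_simps)
  then show ?thesis using assms by (metis pdv_diff pdv_mult_left)
qed

lemma pdv_cancel_power:
  assumes "pdv m h (a * u - 1)" "pdv m h (a ^ j * z)"
  shows "pdv m h z"
proof -
  have "pdv m h ((a * u) ^ j - 1 ^ j)" using pdv_power_diff[OF assms(1)] .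
  then have "pdv m h (a ^ j * u ^ j - 1)" by (simp add: power_mult_distrib)
  from pdv_cancel_unit[OF this assms(2)] show ?thesis .
qed

lemma smult_of_nat_poly: "(of_nat c :: int poly) * x = smult (int c) x"
  by (simp add: of_nat_poly)

lemma frob1:
  assumes p: "prime p"
  shows "eqm (int p) ((a + b) ^ p) (a ^ p + b ^ p)"
proof -
  define f where "f k = (of_nat (p choose k) :: int poly) * a ^ k * b ^ (p - k)" for k
  have p0: "p > 1" using p prime_gt_1_nat by blast
  have set: "{..p} = insert 0 (insert p {1..<p})" using p0 by auto
  have "(a + b) ^ p = (\<Sum>k\<le>p. f k)" unfolding f_def by (rule binomial_ring)
  also have "\<dots> = f 0 + (f p + (\<Sum>k\<in>{1..<p}. f k))"
    unfolding set using p0 by (simp add: sum.insert)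
  also have "f 0 = b ^ p" unfolding f_def by simp
  also have "f p = a ^ p" unfolding f_def by simp
  also have "(\<Sum>k\<in>{1..<p}. f k) = smult (int p) (\<Sum>k\<in>{1..<p}. of_nat ((p choose k) div p) * a ^ k * b ^ (p - k))"
  proof -
    have "f k = smult (int p) (of_nat ((p choose k) div p) * a ^ k * b ^ (p - k))" if "k \<in> {1..<p}" for k
    proof -
      have "p dvd p choose k" using that p by (intro dvd_choose_prime) auto
      then have "p choose k = p * ((p choose k) div p)" by simp
      then have "(of_nat (p choose k) :: int poly) = of_nat p * of_nat ((p choose k) div p)"
        by (metis of_nat_mult)
      then show ?thesis unfolding f_def by (simp add: smult_of_nat_poly mult.assoc)
    qed
    then show ?thesis unfolding smult_sum2 by (intro sum.cong) auto
  qed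
  finally have "(a + b) ^ p = b ^ p + (a ^ p + smult (int p) (\<Sum>k\<in>{1..<p}. of_nat ((p choose k) div p) * a ^ k * b ^ (p - k)))" .
  then have "(a + b) ^ p = (a ^ p + b ^ p) + smult (int p) (\<Sum>k\<in>{1..<p}. of_nat ((p choose k) div p) * a ^ k * b ^ (p - k))"
    by (simp only: add_ac)
  then show ?thesis unfolding eqm_def by blast
qed

lemma pow_pow_Suc: "(x ^ (p ^ s)) ^ p = (x :: 'a :: monoid_mult) ^ (p ^ Suc s)"
  by (simp only: power_Suc2 power_mult)

lemma frob:
  assumes p: "prime p"
  shows "eqm (int p) ((a + b) ^ (p ^ s)) (a ^ (p ^ s) + b ^ (p ^ s))"
proof (induction s)
  case 0 then show ?case by simp
next
  case (Suc s)
  have e1: "eqm (int p) (((a + b) ^ (p ^ s)) ^ p) ((a ^ (p ^ s) + b ^ (p ^ s)) ^ p)"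
    using Suc by (rule eqm_power)
  have e2: "eqm (int p) ((a ^ (p ^ s) + b ^ (p ^ s)) ^ p) ((a ^ (p ^ s)) ^ p + (b ^ (p ^ s)) ^ p)"
    by (rule frob1[OF p])
  from eqm_trans[OF e1 e2] show ?case unfolding pow_pow_Suc .
qed

lemma neg_one_pow_eqm:
  assumes p: "prime p"
  shows "eqm (int p) ((-1 :: int poly) ^ (p ^ s)) (-1)"
proof (cases "even (p ^ s)")
  case True
  then have "even p" using even_power by blast
  then have "2 dvd p" by simp
  then have "p = 2" using p two_is_prime_nat primes_dvd_imp_eq by blast
  have "(1::int poly) = -1 + smult (int 2) 1" by (simp add: numeral_poly)
  then show ?thesis using True \<open>p = 2\<close> unfolding eqm_def by (intro exI[of _ 1]) simp
next
  case False
  then have "(-1 :: int poly) ^ (p ^ s) = -1" by simp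
  then show ?thesis by simp
qed

lemma frob_minus1:
  assumes p: "prime p"
  shows "eqm (int p) ((a - 1) ^ (p ^ s)) (a ^ (p ^ s) - 1)"
proof -
  have "eqm (int p) ((a + -1) ^ (p ^ s)) (a ^ (p ^ s) + (-1) ^ (p ^ s))" by (rule frob[OF p])
  moreover have "eqm (int p) (a ^ (p ^ s) + (-1) ^ (p ^ s)) (a ^ (p ^ s) + -1)"
    by (rule eqm_add[OF eqm_refl neg_one_pow_eqm[OF p]])
  ultimately have "eqm (int p) ((a + -1) ^ (p ^ s)) (a ^ (p ^ s) + -1)" by (rule eqm_trans)
  then show ?thesis by (simp only: diff_conv_add_uminus)
qed

lemma frob_plus1:
  assumes p: "prime p"
  shows "eqm (int p) ((a + 1) ^ (p ^ s)) (a ^ (p ^ s) + 1)"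
  using frob[OF p, of a 1 s] by simp

lemma Mp_nonzero_lead:
  assumes "poly_mod.Mp m z \<noteq> 0"
  shows "poly_mod.M m (lead_coeff (poly_mod.Mp m z)) \<noteq> 0"
  using assms by (metis leading_coeff_0_iff poly_mod.M_M poly_mod.Mp_coeff)

lemma monic_mult_zero:
  fixes m :: int
  assumes m: "m > 1" and h: "monic h" and hz: "h * z = smult m r"
  shows "\<exists>r'. z = smult m r'"
proof -
  interpret poly_mod_2 m using m by unfold_locales
  have "Mp (h * z) = 0" using hz by simp
  show ?thesis
  proof (cases "Mp z = 0")
    case True
    then show ?thesis using Dp_Mp_eq[of z] by auto
  next
    case False
    have "lead_coeff (Mp z) mod m \<noteq> 0" using Mp_nonzero_lead[OF False] by (simp add: M_def)
    from degree_m_mult_eq[OF h this m]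
    have "degree (Mp (h * Mp z)) = degree h + degree (Mp z)" .
    have lc: "lead_coeff (h * Mp z) = lead_coeff (Mp z)" using h by (simp add: lead_coeff_mult)
    have "coeff (Mp (h * Mp z)) (degree (h * Mp z)) = M (lead_coeff (Mp z))"
      by (simp only: Mp_coeff lc)
    moreover have "M (lead_coeff (Mp z)) \<noteq> 0" using Mp_nonzero_lead[OF False] by simp
    moreover have "Mp (h * Mp z) = 0" using \<open>Mp (h * z) = 0\<close> by simp
    ultimately show ?thesis by (metis coeff_0)
  qed
qed

lemma pdv_cancel_monic:
  assumes m: "m > 1" and h: "monic h" and d: "pdv m (h * a) (h * b)"
  shows "pdv m a b"
proof -
  from d obtain q r where "h * b = q * (h * a) + smult m r" unfolding pdv_def by auto
  then have "h * (b - q * a) = smult m r" by (simp add: algebra_simps)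
  from monic_mult_zero[OF m h this] obtain r' where "b - q * a = smult m r'" by auto
  then have "b = q * a + smult m r'" by (simp add: algebra_simps)
  then show ?thesis unfolding pdv_def by auto
qed

lemma eqm_cancel_monic:
  assumes m: "m > 1" and h: "monic h" and d: "eqm m (h * a) (h * b)"
  shows "eqm m a b"
proof -
  from d obtain r where "h * a - h * b = smult m r" unfolding eqm_iff_diff by auto
  then have "h * (a - b) = smult m r" by (simp add: algebra_simps)
  from monic_mult_zero[OF m h this] show ?thesis unfolding eqm_iff_diff by auto
qed

lemma pdv_small:
  fixes m :: int
  assumes m: "m > 1" and h: "monic h" and d: "pdv m h f" and deg: "degree f < degree h"
  shows "\<exists>r. f = smult m r"
proof -
  interpret poly_mod_2 m using m by unfold_locales
  have "h dvdm f" using d unfolding pdv_def div_mod_iff_dvdm .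
  have "Mp f = 0"
  proof (rule ccontr)
    assume "Mp f \<noteq> 0"
    from dvdm_degree[OF h \<open>h dvdm f\<close> this] deg show False by simp
  qed
  then show ?thesis using Dp_Mp_eq[of f] by auto
qed

lemma pdv_small_coeff:
  assumes m: "m > 1" and h: "monic h" and d: "pdv m h f" and deg: "degree f < degree h"
  shows "m dvd coeff f i"
  using pdv_small[OF assms] by auto

abbreviation YY :: "int poly" where "YY \<equiv> [:1, 1:]"
abbreviation XX :: "int poly" where "XX \<equiv> [:0, 1:]"

lemma inv_mod_p:
  assumes p: "prime p" and nd: "\<not> p dvd c"
  shows "\<exists>u v. u * int c + v * int p = (1::int)"
proof -
  have "gcd c p dvd p" by simp
  then have "gcd c p = 1 \<or> gcd c p = p" using p unfolding prime_nat_iff by blast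
  moreover have "gcd c p \<noteq> p" using nd by (metis gcd_dvd1)
  ultimately have "gcd c p = 1" by blast
  then have "gcd (int c) (int p) = 1" by (simp add: gcd_int_int_eq)
  with bezout_int[of "int c" "int p"] show ?thesis by metis
qed

lemma pdv_cancel_const:
  assumes p: "prime p" and nd: "\<not> p dvd c" and d: "pdv (int p) h (smult (int c) z)"
  shows "pdv (int p) h z"
proof -
  obtain u v where uv: "u * int c + v * int p = (1::int)" using inv_mod_p[OF p nd] by blast
  have "z = smult (u * int c + v * int p) z" using uv by simp
  also have "\<dots> = smult u (smult (int c) z) + smult (int p) (smult v z)"
    by (simp only: smult_add_left smult_smult mult.commute)
  finally have "z = smult u (smult (int c) z) + smult (int p) (smult v z)" .
  moreover have "pdv (int p) h (smult u (smult (int c) z))"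
  proof -
    have A: "pdv (int p) h ([:u:] * smult (int c) z)" by (rule pdv_mult_left[OF d])
    have "[:u:] * smult (int c) z = smult u (smult (int c) z)" by (simp add: mult.commute)
    then show ?thesis using A by metis
  qed
  ultimately show ?thesis by (metis pdv_add pdv_smult_m)
qed

lemma pdv_one_false:
  assumes p: "prime p" and h: "monic h" and dh: "degree h > 0" and d: "pdv (int p) h 1"
  shows False
proof -
  have "int p > 1" using p prime_gt_1_nat by auto
  from pdv_small_coeff[OF this h d, of 0] dh have "int p dvd 1" by simp
  then show False using \<open>int p > 1\<close> by auto
qed

lemma unit_Y:
  assumes "pdv m q (YY ^ L - 1)" "L > 0"
  shows "pdv m q (YY * YY ^ (L - 1) - 1)"
proof -
  obtain l where l: "L = Suc l" using assms(2) by (cases L) auto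
  have "YY * YY ^ (L - 1) = YY ^ L" unfolding l by simp
  then show ?thesis using assms(1) by simp
qed

lemma decomp_pow:
  fixes p r :: nat
  assumes p: "prime p" and r: "r > 0"
  shows "\<exists>s r'. r = p ^ s * r' \<and> \<not> p dvd r'"
proof -
  have nu: "\<not> is_unit p" using p by (simp add: prime_nat_iff)
  have "p ^ multiplicity p r dvd r" by (rule multiplicity_dvd)
  moreover have "\<not> p dvd r div p ^ multiplicity p r"
    using multiplicity_decompose[of r p] r nu by simp
  ultimately show ?thesis by (metis dvd_mult_div_cancel)
qed

lemma one_plus_pow:
  fixes V :: "'a :: comm_ring_1"
  shows "\<exists>Q. (1 + V) ^ n = 1 + of_nat n * V + V ^ 2 * Q"
proof (induction n)
  case 0 then show ?case by (intro exI[of _ 0]) simp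
next
  case (Suc n)
  then obtain Q where Q: "(1 + V) ^ n = 1 + of_nat n * V + V ^ 2 * Q" by blast
  have "(1 + V) ^ Suc n = (1 + of_nat n * V + V ^ 2 * Q) * (1 + V)" using Q by simp
  also have "\<dots> = 1 + of_nat (Suc n) * V + V ^ 2 * (of_nat n + Q + Q * V)"
    by (simp add: algebra_simps power2_eq_square)
  finally show ?case by blast
qed

lemma pderiv_YY: "pderiv YY = 1"
  by (simp add: pderiv_pCons)

lemma pderiv_YY_pow: "pderiv (YY ^ Suc n) = smult (of_nat (Suc n)) (YY ^ n)"
  by (simp only: pderiv_power_Suc pderiv_YY mult_1_right)

context
  fixes p :: nat and H :: "int poly" and L' :: nat
  assumes p: "prime p" and H: "monic H" and degH: "degree H > 0" and L'0: "L' > 0"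
    and ndL: "\<not> p dvd L'"
    and hi: "pdv (int p) H (YY ^ L' - 1)"
    and hii: "\<And>d. 0 < d \<Longrightarrow> d < L' \<Longrightarrow> \<not> pdv (int p) H (YY ^ d - 1)"
begin

lemma m1: "int p > 1" using p prime_gt_1_nat by auto

lemma upper_alg: "pdv (int p) (H ^ (p ^ k)) (YY ^ (p ^ k * L') - 1)"
proof -
  obtain q r where qr: "YY ^ L' - 1 = q * H + smult (int p) r" using hi unfolding pdv_def by blast
  have e1: "eqm (int p) ((YY ^ L' - 1) ^ (p ^ k)) ((YY ^ L') ^ (p ^ k) - 1)"
    by (rule frob_minus1[OF p])
  have e2: "eqm (int p) ((YY ^ L' - 1) ^ (p ^ k)) ((q * H) ^ (p ^ k))"
    unfolding qr by (intro eqm_power eqm_smult_m)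
  have "eqm (int p) ((q * H) ^ (p ^ k)) ((YY ^ L') ^ (p ^ k) - 1)"
    using eqm_trans[OF eqm_sym[OF e2] e1] .
  moreover have "pdv (int p) (H ^ (p ^ k)) ((q * H) ^ (p ^ k))"
    by (intro pdv_dvd) (simp add: power_mult_distrib)
  ultimately have "pdv (int p) (H ^ (p ^ k)) ((YY ^ L') ^ (p ^ k) - 1)" by (rule pdv_eqm)
  moreover have "(YY ^ L') ^ (p ^ k) = YY ^ (p ^ k * L')" by (metis power_mult mult.commute)
  ultimately show ?thesis by simp
qed

lemma split_one: "(x :: 'a :: comm_ring_1) = a * b \<Longrightarrow> x - 1 = a * (b - 1) + (a - 1)"
  by (simp add: algebra_simps)

lemma order_H:
  assumes "pdv (int p) H (YY ^ P - 1)"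
  shows "L' dvd P"
proof (rule ccontr)
  assume nd: "\<not> L' dvd P"
  have eq: "YY ^ P - 1 = YY ^ (P mod L') * ((YY ^ L') ^ (P div L') - 1 ^ (P div L')) + (YY ^ (P mod L') - 1)"
  proof -
    have "P = L' * (P div L') + P mod L'" by simp
    then have "YY ^ P = YY ^ (L' * (P div L')) * YY ^ (P mod L')" by (metis power_add)
    then have "YY ^ P = (YY ^ L') ^ (P div L') * YY ^ (P mod L')" by (simp only: power_mult)
    then have "YY ^ P = YY ^ (P mod L') * (YY ^ L') ^ (P div L')" by (simp only: mult.commute)
    from split_one[OF this] show ?thesis by (simp only: power_one)
  qed
  have "pdv (int p) H ((YY ^ L') ^ (P div L') - 1 ^ (P div L'))"
    by (rule pdv_power_diff) (use hi in simp)
  then have "pdv (int p) H (YY ^ (P mod L') * ((YY ^ L') ^ (P div L') - 1 ^ (P div L')))"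
    by (rule pdv_mult_left)
  from pdv_diff[OF assms this] have "pdv (int p) H (YY ^ (P mod L') - 1)"
    unfolding eq by (simp only: add_diff_cancel_left')
  moreover have "0 < P mod L'" "P mod L' < L'" using nd L'0 by (auto simp: mod_greater_zero_iff_not_dvd)
  ultimately show False using hii by blast
qed

lemma descent:
  assumes ER: "YY ^ L' - 1 = E * H + smult (int p) R"
  shows "pdv (int p) H (E ^ Suc j) \<Longrightarrow> pdv (int p) H (E ^ j)"
proof -
  assume d: "pdv (int p) H (E ^ Suc j)"
  obtain l where l: "L' = Suc l" using L'0 by (cases L') auto
  have "pderiv (YY ^ L' - 1) = pderiv (E * H + smult (int p) R)" using ER by simp
  moreover have "pderiv (YY ^ L' - 1) = smult (int L') (YY ^ l)"
    unfolding l pderiv_diff pderiv_YY_pow by simp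
  moreover have "pderiv (E * H + smult (int p) R) = E * pderiv H + H * pderiv E + smult (int p) (pderiv R)"
    by (simp add: pderiv_mult pderiv_add pderiv_smult algebra_simps)
  ultimately have "smult (int L') (YY ^ l) = E * pderiv H + H * pderiv E + smult (int p) (pderiv R)"
    by simp
  then have "smult (int L') (YY ^ l) * E ^ j = pderiv H * E ^ Suc j + H * (pderiv E * E ^ j) + smult (int p) (pderiv R * E ^ j)"
    by (simp add: algebra_simps)
  moreover have "pdv (int p) H (pderiv H * E ^ Suc j + H * (pderiv E * E ^ j) + smult (int p) (pderiv R * E ^ j))"
  proof -
    have a1: "pdv (int p) H (pderiv H * E ^ Suc j)" by (rule pdv_mult_left[OF d])
    have a2: "pdv (int p) H (H * (pderiv E * E ^ j))" by (rule pdv_dvd) simp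
    show ?thesis by (intro pdv_add a1 a2 pdv_smult_m)
  qed
  ultimately have "pdv (int p) H (YY ^ l * smult (int L') (E ^ j))" by (simp add: mult.commute mult.left_commute)
  moreover have "pdv (int p) H (YY * YY ^ (L' - 1) - 1)" using unit_Y[OF hi L'0] .
  ultimately have "pdv (int p) H (smult (int L') (E ^ j))" by (metis pdv_cancel_power)
  then show ?thesis using pdv_cancel_const[OF p ndL] by blast
qed

lemma lower_alg:
  assumes hyp: "pdv (int p) (H ^ (p ^ k)) (YY ^ M * (YY ^ P - 1))" and P0: "P > 0"
  shows "p ^ k * L' dvd P"
proof -
  let ?t = "p ^ k"
  have up: "pdv (int p) (H ^ ?t) (YY ^ (?t * L') - 1)" by (rule upper_alg)
  have tL: "?t * L' > 0" using L'0 p by (simp add: prime_gt_0_nat)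
  have hP: "pdv (int p) (H ^ ?t) (YY ^ P - 1)"
    using pdv_cancel_power[OF unit_Y[OF up tL] hyp] .
  have "H dvd H ^ ?t" using p by (simp add: prime_gt_0_nat)
  then have "pdv (int p) H (YY ^ P - 1)" using hP by (metis pdv_trans pdv_dvd)
  from order_H[OF this] obtain r where r: "P = L' * r" by (auto elim: dvdE)
  have r0: "r > 0" using r P0 by (cases r) auto
  obtain s r' where sr: "r = p ^ s * r'" and ndr: "\<not> p dvd r'" using decomp_pow[OF p r0] by blast
  show ?thesis
  proof (cases "k \<le> s")
    case True
    then have "p ^ k dvd p ^ s" by (simp add: le_imp_power_dvd)
    then show ?thesis unfolding r sr by (simp add: mult_dvd_mono)
  next
    case False
    then have sk: "s < k" by simp
    obtain E R where ER: "YY ^ L' - 1 = E * H + smult (int p) R" using hi unfolding pdv_def by blast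
    define W where "W = YY ^ L' - 1"
    define V where "V = W ^ (p ^ s)"
    have YP: "YY ^ P = ((1 + W) ^ (p ^ s)) ^ r'"
      unfolding W_def r sr by (simp add: power_mult)
    have e1: "eqm (int p) ((1 + W) ^ (p ^ s)) (1 + V)"
      using frob_plus1[OF p, of W s] unfolding V_def by (simp add: add.commute)
    obtain Q where Q: "(1 + V) ^ r' = 1 + of_nat r' * V + V ^ 2 * Q" using one_plus_pow by blast
    have eV: "eqm (int p) V (E ^ (p ^ s) * H ^ (p ^ s))"
      unfolding V_def W_def ER by (simp add: power_mult_distrib[symmetric] eqm_power eqm_smult_m)
    have "eqm (int p) (YY ^ P - 1) ((1 + V) ^ r' - 1)"
      unfolding YP by (intro eqm_diff eqm_power e1 eqm_refl)
    moreover have "(1 + V) ^ r' - 1 = V * (of_nat r' + V * Q)"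
      unfolding Q by (simp add: algebra_simps power2_eq_square)
    ultimately have "eqm (int p) (YY ^ P - 1) (V * (of_nat r' + V * Q))" by simp
    moreover have "eqm (int p) (V * (of_nat r' + V * Q)) (H ^ (p ^ s) * (E ^ (p ^ s) * (of_nat r' + V * Q)))"
    proof -
      have "eqm (int p) (V * (of_nat r' + V * Q)) (E ^ (p ^ s) * H ^ (p ^ s) * (of_nat r' + V * Q))"
        using eqm_mult[OF eV eqm_refl] .
      moreover have "E ^ (p ^ s) * H ^ (p ^ s) * (of_nat r' + V * Q) = H ^ (p ^ s) * (E ^ (p ^ s) * (of_nat r' + V * Q))"
        by (simp only: mult_ac)
      ultimately show ?thesis by simp
    qed
    ultimately have "eqm (int p) (YY ^ P - 1) (H ^ (p ^ s) * (E ^ (p ^ s) * (of_nat r' + V * Q)))"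
      by (rule eqm_trans)
    then have d1: "pdv (int p) (H ^ ?t) (H ^ (p ^ s) * (E ^ (p ^ s) * (of_nat r' + V * Q)))"
      using hP by (rule pdv_eqm)
    have "p ^ s + 1 \<le> p ^ k"
    proof -
      have "p ^ Suc s \<le> p ^ k" by (rule power_increasing) (use sk prime_gt_0_nat[OF p] in auto)
      moreover have "p ^ s + 1 \<le> p ^ Suc s"
      proof -
        have a: "p ^ s \<ge> 1" using prime_gt_0_nat[OF p] by simp
        have b: "p \<ge> 2" using prime_ge_2_nat[OF p] .
        have "p ^ Suc s = p * p ^ s" by simp
        moreover have "p * p ^ s \<ge> 2 * p ^ s" using b by simp
        ultimately show ?thesis using a by linarith
      qed
      ultimately show ?thesis by simp
    qed
    then have "H ^ (p ^ s + 1) dvd H ^ ?t" by (rule le_imp_power_dvd)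
    then have "H ^ (p ^ s) * H dvd H ^ ?t" by (simp add: mult.commute)
    then have "pdv (int p) (H ^ (p ^ s) * H) (H ^ (p ^ s) * (E ^ (p ^ s) * (of_nat r' + V * Q)))"
      using d1 by (metis pdv_trans pdv_dvd)
    then have d2: "pdv (int p) H (E ^ (p ^ s) * (of_nat r' + V * Q))"
      using pdv_cancel_monic[OF m1 monic_power[OF H]] by blast
    have "pdv (int p) H V"
    proof -
      have "H dvd E ^ (p ^ s) * H ^ (p ^ s)" using p by (simp add: prime_gt_0_nat)
      then show ?thesis using eV by (metis pdv_dvd pdv_eqm eqm_sym)
    qed
    then have "pdv (int p) H (E ^ (p ^ s) * (V * Q))" by (intro pdv_mult_left pdv_mult_right)
    then have "pdv (int p) H (E ^ (p ^ s) * of_nat r')"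
      using d2 by (metis pdv_diff distrib_left add_diff_cancel_right')
    then have "pdv (int p) H (smult (int r') (E ^ (p ^ s)))"
      by (simp add: smult_of_nat_poly mult.commute)
    then have dE: "pdv (int p) H (E ^ (p ^ s))" by (rule pdv_cancel_const[OF p ndr])
    have "pdv (int p) H (E ^ (p ^ s - j))" if "j \<le> p ^ s" for j
      using that
    proof (induction j)
      case 0 then show ?case using dE by simp
    next
      case (Suc j)
      then have "pdv (int p) H (E ^ Suc (p ^ s - Suc j))" by (simp add: Suc_diff_Suc)
      then show ?case by (rule descent[OF ER])
    qed
    from this[of "p ^ s"] have "pdv (int p) H 1" by simp
    then show ?thesis using pdv_one_false[OF p H degH] by blast
  qed
qed

end

definition polyz :: "nat \<Rightarrow> (nat \<Rightarrow> int) \<Rightarrow> int poly" where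
  "polyz N f = Poly (map (\<lambda>e. f ((N - e) mod N)) [0..<N])"

definition polyv :: "nat \<Rightarrow> (nat \<Rightarrow> nat) \<Rightarrow> int poly" where
  "polyv N a = polyz N (\<lambda>i. int (a i))"

lemma coeff_polyz: "coeff (polyz N f) e = (if e < N then f ((N - e) mod N) else 0)"
  unfolding polyz_def coeff_Poly nth_default_def by simp

lemma coeff_polyv: "coeff (polyv N a) e = (if e < N then int (a ((N - e) mod N)) else 0)"
  unfolding polyv_def coeff_polyz by simp

lemma XXN_monom: "(XX :: int poly) ^ N = monom 1 N"
  by (simp add: monom_altdef)

lemma coeff_XXN: "coeff ((XX :: int poly) ^ N) e = (if e = N then 1 else 0)"
  unfolding XXN_monom by (simp add: coeff_monom)

lemma coeff_XXN': "coeff ((pCons 0 1 :: int poly) ^ N) e = (if e = N then 1 else 0)"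
  using coeff_XXN by simp

lemma coeff_YY_mult: "coeff (YY * A) e = coeff A e + (if e = 0 then 0 else coeff A (e - 1))"
proof -
  have "YY * A = A + pCons 0 A" by (simp add: algebra_simps)
  then show ?thesis by (cases e) auto
qed

lemma YY_polyz:
  assumes N: "N \<ge> 1"
  shows "YY * polyz N f = polyz N (\<lambda>i. f i + f (Suc i mod N)) + smult (f (1 mod N)) (XX ^ N - 1)"
proof (rule poly_eqI)
  fix e
  consider "e = 0" | "0 < e" "e < N" | "e = N" | "e > N" by linarith
  then show "coeff (YY * polyz N f) e = coeff (polyz N (\<lambda>i. f i + f (Suc i mod N)) + smult (f (1 mod N)) (XX ^ N - 1)) e"
  proof cases
    case 1 then show ?thesis using N
      unfolding coeff_YY_mult coeff_add coeff_smult coeff_diff coeff_XXN coeff_1 coeff_polyz by simp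
  next
    case 2
    have "(N - (e - 1)) mod N = Suc (N - e) mod N" using 2 by (simp add: Suc_diff_le)
    moreover have "(N - e) mod N = N - e" using 2 by simp
    ultimately show ?thesis using 2
      unfolding coeff_YY_mult coeff_add coeff_smult coeff_diff coeff_XXN coeff_1 coeff_polyz by simp
  next
    case 3 then show ?thesis using N
      unfolding coeff_YY_mult coeff_add coeff_smult coeff_diff coeff_XXN coeff_1 coeff_polyz by simp
  next
    case 4 then show ?thesis
      unfolding coeff_YY_mult coeff_add coeff_smult coeff_diff coeff_XXN coeff_1 coeff_polyz by simp
  qed
qed

lemma eqm_coeffI:
  assumes "\<And>e. m dvd coeff A e - coeff B e"
  shows "eqm m A B"
proof -
  define r where "r = map_poly (\<lambda>x. x div m) (A - B)"
  have "A - B = smult m r"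
  proof (rule poly_eqI)
    fix e
    have "coeff r e = (coeff A e - coeff B e) div m" unfolding r_def by (simp add: coeff_map_poly)
    then show "coeff (A - B) e = coeff (smult m r) e" using assms[of e] by simp
  qed
  then show ?thesis unfolding eqm_iff_diff by blast
qed

lemma Tmap_polyv:
  assumes N: "N \<ge> 1"
  shows "pdv (int p) (XX ^ N - 1) (polyv N (Tmap p N b) - YY * polyv N b)"
proof -
  define f where "f i = int (b i)" for i
  have e: "eqm (int p) (polyv N (Tmap p N b)) (polyz N (\<lambda>i. f i + f (Suc i mod N)))"
  proof (rule eqm_coeffI)
    fix e
    show "int p dvd coeff (polyv N (Tmap p N b)) e - coeff (polyz N (\<lambda>i. f i + f (Suc i mod N))) e"
    proof (cases "e < N")
      case True
      have lt: "(N - e) mod N < N" using N by simp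
      have "int ((b i + b (Suc i mod N)) mod p) - (int (b i) + int (b (Suc i mod N))) = - (int p * int ((b i + b (Suc i mod N)) div p))" for i
        by (metis add_diff_cancel_left' diff_add_cancel minus_diff_eq mod_div_mult_eq mult.commute of_nat_add of_nat_mult div_mult_mod_eq)
      then show ?thesis using True lt unfolding coeff_polyv coeff_polyz f_def Tmap_def by simp
    qed (simp add: coeff_polyv coeff_polyz)
  qed
  have Yp: "YY * polyv N b = polyz N (\<lambda>i. f i + f (Suc i mod N)) + smult (f (1 mod N)) (XX ^ N - 1)"
    unfolding polyv_def f_def by (rule YY_polyz[OF N])
  have "polyz N (\<lambda>i. f i + f (Suc i mod N)) - YY * polyv N b = - smult (f (1 mod N)) (XX ^ N - 1)"
    unfolding Yp by simp
  moreover have "pdv (int p) (XX ^ N - 1) (- smult (f (1 mod N)) (XX ^ N - 1))"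
    by (rule pdv_uminus, rule pdv_dvd) (simp add: dvd_smult)
  ultimately have "pdv (int p) (XX ^ N - 1) (polyz N (\<lambda>i. f i + f (Suc i mod N)) - YY * polyv N b)"
    by simp
  then show ?thesis by (rule pdv_eqm[OF eqm_sym[OF eqm_diff[OF e eqm_refl]]])
qed

lemma Tmap_iter_polyv:
  assumes N: "N \<ge> 1"
  shows "pdv (int p) (XX ^ N - 1) (polyv N ((Tmap p N ^^ j) a) - YY ^ j * polyv N a)"
proof (induction j)
  case 0 then show ?case by simp
next
  case (Suc j)
  let ?b = "(Tmap p N ^^ j) a"
  have eq: "polyv N ((Tmap p N ^^ Suc j) a) - YY ^ Suc j * polyv N a =
        (polyv N (Tmap p N ?b) - YY * polyv N ?b) + YY * (polyv N ?b - YY ^ j * polyv N a)"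
    by (simp add: algebra_simps)
  have A: "pdv (int p) (XX ^ N - 1) (polyv N (Tmap p N ?b) - YY * polyv N ?b)" by (rule Tmap_polyv[OF N])
  have B: "pdv (int p) (XX ^ N - 1) (YY * (polyv N ?b - YY ^ j * polyv N a))" by (rule pdv_mult_left[OF Suc.IH])
  show ?case by (subst eq) (rule pdv_add[OF A B])
qed

lemma Tmap_vecs: "p > 0 \<Longrightarrow> Tmap p N a \<in> vecs p N"
  unfolding Tmap_def vecs_def by auto

lemma Tmap_iter_vecs: "p > 0 \<Longrightarrow> a \<in> vecs p N \<Longrightarrow> (Tmap p N ^^ j) a \<in> vecs p N"
  by (induction j) (auto simp: Tmap_vecs)

lemma degree_XXN: "N \<ge> 1 \<Longrightarrow> degree ((XX :: int poly) ^ N - 1) = N"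
proof -
  assume N: "N \<ge> 1"
  have d: "degree ((XX :: int poly) ^ N) = N" by (simp add: degree_power_eq)
  have "degree (-1 + (XX :: int poly) ^ N) = N"
    using degree_add_eq_right[of "-1" "(XX :: int poly) ^ N"] d N by simp
  then show ?thesis by simp
qed

lemma monic_XXN: "N \<ge> 1 \<Longrightarrow> monic ((XX :: int poly) ^ N - 1)"
proof -
  assume N: "N \<ge> 1"
  have d: "degree ((XX :: int poly) ^ N) = N" by (simp add: degree_power_eq)
  have "lead_coeff (-1 + XX ^ N) = lead_coeff ((XX :: int poly) ^ N)"
    by (rule lead_coeff_add_le) (use d N in simp)
  then show ?thesis by (simp add: lead_coeff_power)
qed

lemma polyv_inj:
  assumes p: "prime p" and N: "N \<ge> 1" and a: "a \<in> vecs p N" and b: "b \<in> vecs p N"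
    and d: "pdv (int p) (XX ^ N - 1) (polyv N a - polyv N b)"
  shows "a = b"
proof
  fix i
  have m1: "int p > 1" using p prime_gt_1_nat by auto
  have deg: "degree (polyv N a - polyv N b) < degree ((XX :: int poly) ^ N - 1)"
  proof -
    have "degree (polyv N a - polyv N b) \<le> N - 1"
      by (rule degree_le) (auto simp: coeff_polyv)
    then show ?thesis using N degree_XXN[OF N] by simp
  qed
  have dv: "int p dvd coeff (polyv N a - polyv N b) e" for e
    by (rule pdv_small_coeff[OF m1 monic_XXN[OF N] d deg])
  show "a i = b i"
  proof (cases "i < N")
    case True
    define e where "e = (N - i) mod N"
    have e: "e < N" "(N - e) mod N = i" unfolding e_def using True
      by (auto simp: mod_if)
    have "int p dvd int (a i) - int (b i)" using dv[of e] e by (simp add: coeff_polyv)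
    then have "int (a i) mod int p = int (b i) mod int p" by (simp add: mod_eq_dvd_iff)
    then have "int (a i mod p) = int (b i mod p)" by (simp only: of_nat_mod)
    moreover have "a i < p" "b i < p" using a b True unfolding vecs_def by auto
    ultimately show ?thesis by simp
  next
    case False
    then show ?thesis using a b unfolding vecs_def by auto
  qed
qed

lemma finite_vecs: "finite (vecs p N)"
proof -
  let ?f = "\<lambda>xs i. if i < N then xs ! i else (0::nat)"
  have sub: "vecs p N \<subseteq> ?f ` {xs. set xs \<subseteq> {..<p} \<and> length xs = N}"
  proof
    fix a assume a: "a \<in> vecs p N"
    have "a = ?f (map a [0..<N])"
    proof (rule ext)
      fix i show "a i = ?f (map a [0..<N]) i" using a unfolding vecs_def by (cases "i < N") auto
    qed
    moreover have "map a [0..<N] \<in> {xs. set xs \<subseteq> {..<p} \<and> length xs = N}"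
      using a unfolding vecs_def by auto
    ultimately show "a \<in> ?f ` {xs. set xs \<subseteq> {..<p} \<and> length xs = N}" by (rule image_eqI)
  qed
  have fin: "finite {xs. set xs \<subseteq> {..<p} \<and> length xs = N}"
    by (rule finite_lists_length_eq) simp
  show ?thesis by (rule finite_subset[OF sub finite_imageI[OF fin]])
qed

definition e0 :: "nat \<Rightarrow> nat" where "e0 i = (if i = 0 then 1 else 0)"

lemma e0_vecs: "p > 1 \<Longrightarrow> N \<ge> 1 \<Longrightarrow> e0 \<in> vecs p N"
  unfolding vecs_def e0_def by auto

lemma polyv_e0:
  assumes N: "N \<ge> 1"
  shows "polyv N e0 = 1"
proof (rule poly_eqI)
  fix e
  show "coeff (polyv N e0) e = coeff 1 e"
  proof (cases "e = 0")
    case True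
    then show ?thesis using N unfolding coeff_polyv e0_def by simp
  next
    case False
    then have "e < N \<Longrightarrow> (N - e) mod N = N - e" by simp
    then show ?thesis using False unfolding coeff_polyv e0_def by simp
  qed
qed

lemma pmax_main:
  fixes p N L :: nat
  assumes p: "prime p" and N: "N \<ge> 1" and L: "L > 0"
    and up: "pdv (int p) (XX ^ N - 1) (YY ^ M0 * (YY ^ L - 1))"
    and low: "\<And>M P. P > 0 \<Longrightarrow> pdv (int p) (XX ^ N - 1) (YY ^ M * (YY ^ P - 1)) \<Longrightarrow> L \<le> P"
  shows "Pmax p N = L"
proof -
  let ?T = "Tmap p N"
  have p1: "p > 1" using p prime_gt_1_nat by blast
  have valid: "\<forall>j\<ge>M0. (?T ^^ (j + L)) a = (?T ^^ j) a" if a: "a \<in> vecs p N" for a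
  proof (intro allI impI)
    fix j assume j: "j \<ge> M0"
    let ?V = "polyv N a"
    have A: "pdv (int p) (XX ^ N - 1) (polyv N ((?T ^^ (j + L)) a) - YY ^ (j + L) * ?V)"
      by (rule Tmap_iter_polyv[OF N])
    have B: "pdv (int p) (XX ^ N - 1) (polyv N ((?T ^^ j) a) - YY ^ j * ?V)"
      by (rule Tmap_iter_polyv[OF N])
    have C: "pdv (int p) (XX ^ N - 1) ((YY ^ (j - M0) * ?V) * (YY ^ M0 * (YY ^ L - 1)))"
      by (rule pdv_mult_left[OF up])
    have "YY ^ (j + L) * ?V - YY ^ j * ?V = (YY ^ (j - M0) * ?V) * (YY ^ M0 * (YY ^ L - 1))"
    proof -
      have "YY ^ j = YY ^ (j - M0) * YY ^ M0" using j by (simp add: power_add[symmetric])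
      then show ?thesis by (simp add: power_add algebra_simps)
    qed
    then have eq: "polyv N ((?T ^^ (j + L)) a) - polyv N ((?T ^^ j) a) =
      (polyv N ((?T ^^ (j + L)) a) - YY ^ (j + L) * ?V) - (polyv N ((?T ^^ j) a) - YY ^ j * ?V)
      + (YY ^ (j - M0) * ?V) * (YY ^ M0 * (YY ^ L - 1))"
      by (simp add: algebra_simps)
    have "pdv (int p) (XX ^ N - 1) (polyv N ((?T ^^ (j + L)) a) - polyv N ((?T ^^ j) a))"
      by (subst eq) (rule pdv_add[OF pdv_diff[OF A B] C])
    moreover have v1: "(?T ^^ (j + L)) a \<in> vecs p N" using Tmap_iter_vecs[OF _ a] p1 by simp
    moreover have v2: "(?T ^^ j) a \<in> vecs p N" using Tmap_iter_vecs[OF _ a] p1 by simp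
    ultimately show "(?T ^^ (j + L)) a = (?T ^^ j) a"
      using polyv_inj[OF p N v1 v2] by simp
  qed
  have le: "cycle_length p N a \<le> L" if a: "a \<in> vecs p N" for a
    unfolding cycle_length_def by (rule Least_le) (use L valid[OF a] in blast)
  have eqL: "cycle_length p N e0 = L"
    unfolding cycle_length_def
  proof (rule Least_equality)
    show "0 < L \<and> (\<exists>M. \<forall>j\<ge>M. (?T ^^ (j + L)) e0 = (?T ^^ j) e0)"
      using L valid[OF e0_vecs[OF p1 N]] by blast
  next
    fix P assume "0 < P \<and> (\<exists>M. \<forall>j\<ge>M. (?T ^^ (j + P)) e0 = (?T ^^ j) e0)"
    then obtain M where P0: "P > 0" and M: "\<forall>j\<ge>M. (?T ^^ (j + P)) e0 = (?T ^^ j) e0" by blast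
    have same: "(?T ^^ (M + P)) e0 = (?T ^^ M) e0" by (rule M[rule_format, OF le_refl])
    have A: "pdv (int p) (XX ^ N - 1) (polyv N ((?T ^^ (M + P)) e0) - YY ^ (M + P) * polyv N e0)"
      by (rule Tmap_iter_polyv[OF N])
    have B: "pdv (int p) (XX ^ N - 1) (polyv N ((?T ^^ M) e0) - YY ^ M * polyv N e0)"
      by (rule Tmap_iter_polyv[OF N])
    have eq2: "YY ^ M * (YY ^ P - 1) = (polyv N ((?T ^^ M) e0) - YY ^ M * polyv N e0) -
        (polyv N ((?T ^^ (M + P)) e0) - YY ^ (M + P) * polyv N e0)"
      unfolding same polyv_e0[OF N] by (simp add: power_add algebra_simps)
    have "pdv (int p) (XX ^ N - 1) (YY ^ M * (YY ^ P - 1))"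
      unfolding eq2 by (rule pdv_diff[OF B A])
    then show "L \<le> P" using low P0 by blast
  qed
  show ?thesis unfolding Pmax_def
  proof (rule Max_eqI)
    show "finite (cycle_length p N ` vecs p N)" using finite_vecs by simp
    show "\<And>y. y \<in> cycle_length p N ` vecs p N \<Longrightarrow> y \<le> L" using le by blast
    show "L \<in> cycle_length p N ` vecs p N" by (rule image_eqI[where x = e0 and f = "cycle_length p N", OF eqL[symmetric] e0_vecs[OF p1 N]])
  qed
qed

lemma pmax_from_H:
  fixes p k N' L' :: nat and H :: "int poly"
  assumes p: "prime p" and H: "monic H" and degH: "degree H > 0" and L'0: "L' > 0"
    and ndL: "\<not> p dvd L'"
    and hi: "pdv (int p) H (YY ^ L' - 1)"
    and hii: "\<And>d. 0 < d \<Longrightarrow> d < L' \<Longrightarrow> \<not> pdv (int p) H (YY ^ d - 1)"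
    and N'1: "N' \<ge> 1"
    and hiv: "eqm (int p) (XX ^ N' - 1) (YY * H)"
  shows "Pmax p (p ^ k * N') = p ^ k * L'"
proof -
  let ?t = "p ^ k"
  let ?N = "p ^ k * N'"
  have t0: "?t > 0" using p by (simp add: prime_gt_0_nat)
  have N1: "?N \<ge> 1" using t0 N'1 by (simp add: Suc_leI)
  have e1: "eqm (int p) ((XX ^ N' - 1) ^ ?t) (XX ^ ?N - 1)"
  proof -
    have "eqm (int p) ((XX ^ N' - 1) ^ ?t) ((XX ^ N') ^ ?t - 1)" by (rule frob_minus1[OF p])
    moreover have "(XX ^ N') ^ ?t = (XX :: int poly) ^ (N' * ?t)" by (rule power_mult[symmetric])
    moreover have "N' * ?t = ?N" by (rule mult.commute)
    ultimately show ?thesis by simp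
  qed
  have e2: "eqm (int p) ((XX ^ N' - 1) ^ ?t) (YY ^ ?t * H ^ ?t)"
    using eqm_power[OF hiv, of ?t] unfolding power_mult_distrib .
  have eN: "eqm (int p) (XX ^ ?N - 1) (YY ^ ?t * H ^ ?t)"
    by (rule eqm_trans[OF eqm_sym[OF e1] e2])
  have up: "pdv (int p) (XX ^ ?N - 1) (YY ^ ?t * (YY ^ (?t * L') - 1))"
  proof -
    have "pdv (int p) (H ^ ?t) (YY ^ (?t * L') - 1)"
      by (rule upper_alg[OF p H degH L'0 ndL hi hii])
    from pdv_mult_both[OF this, of "YY ^ ?t"]
    have "pdv (int p) (YY ^ ?t * H ^ ?t) (YY ^ ?t * (YY ^ (?t * L') - 1))"
      by (simp add: mult.commute)
    then show ?thesis by (rule pdv_eqm_left[OF eqm_sym[OF eN]])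
  qed
  have low: "?t * L' \<le> P" if P0: "P > 0" and d: "pdv (int p) (XX ^ ?N - 1) (YY ^ M * (YY ^ P - 1))" for M P
  proof -
    have "pdv (int p) (YY ^ ?t * H ^ ?t) (YY ^ M * (YY ^ P - 1))"
      by (rule pdv_eqm_left[OF eN d])
    moreover have "pdv (int p) (H ^ ?t) (YY ^ ?t * H ^ ?t)" by (rule pdv_dvd) simp
    ultimately have "pdv (int p) (H ^ ?t) (YY ^ M * (YY ^ P - 1))" by (rule pdv_trans[rotated])
    from lower_alg[OF p H degH L'0 ndL hi hii this P0] have "?t * L' dvd P" .
    then show ?thesis using P0 by (simp add: dvd_imp_le)
  qed
  have L0: "?t * L' > 0" using t0 L'0 by simp
  show ?thesis by (rule pmax_main[OF p N1 L0 up low])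
qed

lemma coeff_YY_pow_0: "coeff (YY ^ e) 0 = 1"
  by (simp add: coeff_0_power)

lemma degree_YY_pow: "degree (YY ^ e) = e"
  by (rule degree_linear_power)

lemma monic_YY_pow: "monic (YY ^ e)"
  by (simp add: lead_coeff_power)

lemma coeff_YY_pow_top: "coeff (YY ^ e) e = 1"
  using monic_YY_pow[of e] degree_YY_pow[of e] by simp

lemma coeff_YY_pow_above: "j > e \<Longrightarrow> coeff (YY ^ e) j = 0"
  using degree_YY_pow[of e] by (simp add: coeff_eq_0)

lemma XX_eq: "(XX :: int poly) = YY - 1"
  by (rule poly_eqI) (simp add: coeff_pCons split: nat.split)

lemma YY_eq: "YY = XX + 1"
  by (rule poly_eqI) (simp add: coeff_pCons split: nat.split)

lemma no_small:
  assumes p: "prime p" and G: "monic G" and d: "pdv (int p) G f" and deg: "degree f < degree G"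
    and nd: "\<not> int p dvd coeff f i"
  shows False
proof -
  have "int p > 1" using p prime_gt_1_nat by auto
  from pdv_small_coeff[OF this G d deg] nd show False by blast
qed

lemma YY_pow_frob:
  assumes p: "prime p"
  shows "eqm (int p) (YY ^ (p ^ n)) (XX ^ (p ^ n) + 1)"
proof -
  have "eqm (int p) ((XX + 1) ^ (p ^ n)) (XX ^ (p ^ n) + 1)" by (rule frob_plus1[OF p])
  then show ?thesis by (simp only: YY_eq[symmetric])
qed

definition Phi :: "nat \<Rightarrow> int poly" where
  "Phi m = (\<Sum>i<m. YY ^ i)"

lemma Phi_props: "monic (Phi (Suc m)) \<and> degree (Phi (Suc m)) = m"
proof (induction m)
  case 0 then show ?case by (simp add: Phi_def)
next
  case (Suc m)
  have eq: "Phi (Suc (Suc m)) = Phi (Suc m) + YY ^ Suc m" unfolding Phi_def by simp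
  have lt: "degree (Phi (Suc m)) < degree (YY ^ Suc m)" using Suc degree_YY_pow[of "Suc m"] by simp
  have "degree (Phi (Suc (Suc m))) = Suc m" unfolding eq degree_add_eq_right[OF lt] degree_YY_pow ..
  moreover have "lead_coeff (Phi (Suc (Suc m))) = 1"
    unfolding eq lead_coeff_add_le[OF lt] by (rule monic_YY_pow)
  ultimately show ?case by simp
qed

lemma XX_Phi: "XX * Phi m = YY ^ m - 1"
proof (induction m)
  case 0 then show ?case by (simp add: Phi_def)
next
  case (Suc m)
  have "XX * Phi (Suc m) = XX * Phi m + XX * YY ^ m" unfolding Phi_def by (simp add: algebra_simps)
  also have "\<dots> = YY ^ m - 1 + (YY - 1) * YY ^ m" unfolding Suc XX_eq[symmetric] by simp
  also have "\<dots> = YY ^ Suc m - 1" by (simp add: algebra_simps)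
  finally show ?case .
qed

lemma coeff_Phi_0: "coeff (Phi m) 0 = int m"
  unfolding Phi_def coeff_sum coeff_YY_pow_0 by simp

lemma part1_H:
  fixes p n :: nat
  assumes p: "prime p" and n: "n \<ge> 1" and p2: "p = 2 \<longrightarrow> n > 1"
  defines "q \<equiv> p ^ n"
  shows "monic (Phi (q - 1)) \<and> degree (Phi (q - 1)) > 0 \<and> q - 1 > 0 \<and> \<not> p dvd (q - 1)
    \<and> pdv (int p) (Phi (q - 1)) (YY ^ (q - 1) - 1)
    \<and> (\<forall>d. 0 < d \<and> d < q - 1 \<longrightarrow> \<not> pdv (int p) (Phi (q - 1)) (YY ^ d - 1))
    \<and> q - 1 \<ge> 1
    \<and> eqm (int p) (XX ^ (q - 1) - 1) (YY * Phi (q - 1))"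
proof -
  have p1: "p \<ge> 2" using prime_ge_2_nat[OF p] .
  have q3: "q \<ge> 3"
  proof (cases "p = 2")
    case True
    then have "n \<ge> 2" using p2 by simp
    then have "p ^ 2 \<le> p ^ n" using p1 by (simp add: power_increasing)
    then show ?thesis using True unfolding q_def by simp
  next
    case False
    then have "p \<ge> 3" using p1 by simp
    moreover have "p ^ 1 \<le> p ^ n" by (rule power_increasing) (use n p1 in auto)
    ultimately show ?thesis unfolding q_def by simp
  qed
  define N' where "N' = q - 1"
  have N'2: "N' \<ge> 2" using q3 unfolding N'_def by simp
  obtain m where m: "N' = Suc m" using N'2 by (cases N') auto
  have H: "monic (Phi N')" and dH: "degree (Phi N') = N' - 1" using Phi_props[of m] m by auto
  have pq: "p dvd q" unfolding q_def using n by (simp add: dvd_power)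
  have ndN: "\<not> p dvd N'"
  proof
    assume "p dvd N'"
    then have "p dvd q - N'" using pq by (simp add: dvd_diff_nat)
    moreover have "q - N' = 1" unfolding N'_def using q3 by simp
    ultimately show False using p1 by simp
  qed
  have hi: "pdv (int p) (Phi N') (YY ^ N' - 1)"
    by (rule pdv_dvd) (metis XX_Phi dvd_triv_right)
  have hii: "\<not> pdv (int p) (Phi N') (YY ^ d - 1)" if d: "0 < d" "d < N'" for d
  proof
    assume dv: "pdv (int p) (Phi N') (YY ^ d - 1)"
    show False
    proof (cases "d < N' - 1")
      case True
      have "degree (YY ^ d - 1) \<le> d"
        using degree_diff_le_max[of "YY ^ d" 1] degree_YY_pow[of d] by simp
      then have deg: "degree (YY ^ d - 1) < degree (Phi N')" using True dH by simp
      have "coeff (YY ^ d - 1) d = 1" using d coeff_YY_pow_top[of d] by simp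
      then have "\<not> int p dvd coeff (YY ^ d - 1) d" using p1 by simp
      then show False using no_small[OF p H dv deg] by blast
    next
      case False
      then have dN: "d = N' - 1" using d by simp
      have split: "Phi N' = Phi d + YY ^ d" unfolding Phi_def dN using m by simp
      have dv2: "pdv (int p) (Phi N') (YY ^ d - 1 - Phi N')" by (rule pdv_diff[OF dv pdv_self])
      have eq: "YY ^ d - 1 - Phi N' = - (1 + Phi d)" unfolding split by simp
      have d1: "d \<ge> 1" using d by simp
      then obtain d' where d': "d = Suc d'" by (cases d) auto
      have "degree (1 + Phi d) \<le> d'"
        using degree_add_le_max[of 1 "Phi d"] Phi_props[of d'] d' by simp
      then have dg: "degree (- (1 + Phi d)) \<le> d'" by (simp only: degree_minus)
      have deg: "degree (YY ^ d - 1 - Phi N') < degree (Phi N')" unfolding eq using dg dH dN d' by linarith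
      have c0: "coeff (YY ^ d - 1 - Phi N') 0 = - (1 + int d)" unfolding eq by (simp add: coeff_Phi_0)
      have ndc: "\<not> int p dvd - (1 + int d)"
      proof
        assume "int p dvd - (1 + int d)"
        then have "int p dvd int N'" using dN d by simp
        then show False using ndN by simp
      qed
      have nd0: "\<not> int p dvd coeff (YY ^ d - 1 - Phi N') 0" unfolding c0 by (rule ndc)
      show False by (rule no_small[OF p H dv2 deg nd0])
    qed
  qed
  have hiv: "eqm (int p) (XX ^ N' - 1) (YY * Phi N')"
  proof -
    have qN: "q = Suc N'" unfolding N'_def using q3 by simp
    have e: "eqm (int p) (YY ^ q) (XX ^ q + 1)" unfolding q_def by (rule YY_pow_frob[OF p])
    have "XX * (YY * Phi N') = YY * (XX * Phi N')" by (rule mult.left_commute)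
    also have "\<dots> = YY * (YY ^ N' - 1)" by (simp only: XX_Phi)
    also have "\<dots> = YY ^ q - YY" unfolding qN by (simp add: algebra_simps)
    finally have a: "XX * (YY * Phi N') = YY ^ q - YY" .
    have b: "XX * (XX ^ N' - 1) = XX ^ q - XX" unfolding qN by (simp add: algebra_simps)
    have e2: "eqm (int p) (YY ^ q - YY) (XX ^ q + 1 - YY)" by (rule eqm_diff[OF e eqm_refl])
    have eqX: "XX ^ q + 1 - YY = XX ^ q - XX" unfolding YY_eq by (rule add_diff_cancel_right)
    have e3: "eqm (int p) (YY ^ q - YY) (XX ^ q - XX)" using e2 unfolding eqX .
    have e4: "eqm (int p) (XX * (XX ^ N' - 1)) (XX * (YY * Phi N'))"
      unfolding a b by (rule eqm_sym[OF e3])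
    have m1: "int p > 1" using p1 by simp
    have mX: "monic (XX :: int poly)" by simp
    show ?thesis by (rule eqm_cancel_monic[OF m1 mX e4])
  qed
  have hii': "\<forall>d. 0 < d \<and> d < N' \<longrightarrow> \<not> pdv (int p) (Phi N') (YY ^ d - 1)" using hii by blast
  have dH0: "degree (Phi N') > 0" using dH N'2 by simp
  have N'0: "N' > 0" "N' \<ge> 1" using N'2 by simp_all
  show ?thesis unfolding N'_def[symmetric] by (intro conjI H dH0 N'0 ndN hi hii' hiv)
qed

definition Gq :: "nat \<Rightarrow> int poly" where
  "Gq q = YY ^ q - YY ^ (q - 1) - 1"

lemma id1: "(a - 1) * (b - 1) - 1 = a * b - a - (b :: 'a :: comm_ring_1)"
  by (simp add: algebra_simps)
lemma id2: "y * (a - c - 1) = y * a - y * c - (y :: 'a :: comm_ring_1)"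
  by (simp add: algebra_simps)
lemma id3: "W - Y = - W * ((Z - 1) * X - 1) + X * (W * (Z - 1) - Z) + (Z * X - (Y :: 'a :: comm_ring_1))"
  by (simp add: algebra_simps)
lemma id4: "x * (q * b - 1) = b * (q * x - a) + (a * b - (x :: 'a :: comm_ring_1))"
  by (simp add: algebra_simps)
lemma id5: "X * (S * Z - A) - S * (Z * X - Y) = S * Y - X * (A :: 'a :: comm_ring_1)"
  by (simp add: algebra_simps)
lemma id6: "(a - 1) * x - 1 = a * x - (x + (1 :: 'a :: comm_ring_1))"
  by (simp add: algebra_simps)
lemma id7: "y * (a * x - 1) = y * a * x - (y :: 'a :: comm_ring_1)"
  by (simp add: algebra_simps)

lemma part2_G:
  fixes p n :: nat
  assumes p: "prime p" and n: "n \<ge> 1"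
  defines "q \<equiv> p ^ n"
  shows "monic (Gq q) \<and> degree (Gq q) > 0 \<and> q * q - 1 > 0 \<and> \<not> p dvd (q * q - 1)
    \<and> pdv (int p) (Gq q) (YY ^ (q * q - 1) - 1)
    \<and> (\<forall>d. 0 < d \<and> d < q * q - 1 \<longrightarrow> \<not> pdv (int p) (Gq q) (YY ^ d - 1))
    \<and> q + 1 \<ge> 1
    \<and> eqm (int p) (XX ^ (q + 1) - 1) (YY * Gq q)"
proof -
  have p1: "p \<ge> 2" using prime_ge_2_nat[OF p] .
  have q2: "q \<ge> 2"
  proof -
    have "p ^ 1 \<le> p ^ n" by (rule power_increasing) (use n p1 in auto)
    then show ?thesis using p1 unfolding q_def by simp
  qed
  let ?G = "Gq q"
  have m1: "int p > 1" using p1 by simp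
  obtain q1 where q1: "q = Suc q1" using q2 by (cases q) auto
  obtain q0 where q0: "q1 = Suc q0" using q2 q1 by (cases q1) auto
  have yq: "YY * YY ^ (q - 1) = YY ^ q" unfolding q1 by simp
  have yq': "YY ^ (q - 1) * YY = YY ^ q" using yq by (simp add: mult.commute)
  have yq2: "YY * YY ^ (q - 2) = YY ^ (q - 1)" unfolding q1 q0 by simp
  have degR: "degree (YY ^ (q - 1) + 1) < degree (YY ^ q)"
  proof -
    have "degree (YY ^ (q - 1) + 1) \<le> max (degree (YY ^ (q - 1))) (degree (1 :: int poly))"
      by (rule degree_add_le_max)
    then show ?thesis using q2 degree_YY_pow[of q] degree_YY_pow[of "q - 1"] by simp
  qed
  have Geq: "?G = - (YY ^ (q - 1) + 1) + YY ^ q" unfolding Gq_def by simp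
  have degR': "degree (- (YY ^ (q - 1) + 1)) < degree (YY ^ q)" using degR by (simp only: degree_minus)
  have G: "monic ?G" unfolding Geq lead_coeff_add_le[OF degR'] by (rule monic_YY_pow)
  have dG: "degree ?G = q" unfolding Geq degree_add_eq_right[OF degR'] by (rule degree_YY_pow)
  have e: "eqm (int p) (YY ^ q) (XX ^ q + 1)" unfolding q_def by (rule YY_pow_frob[OF p])
  have eX: "eqm (int p) (XX ^ q) (YY ^ q - 1)"
  proof -
    have "eqm (int p) (YY ^ q - 1) (XX ^ q + 1 - 1)" by (rule eqm_diff[OF e eqm_refl])
    then show ?thesis by (simp add: eqm_sym)
  qed
  have c1: "YY ^ (q - 1) * XX - 1 = ?G"
    unfolding Gq_def XX_eq by (simp only: right_diff_distrib mult_1_right yq')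
  have c2: "pdv (int p) ?G (YY ^ q * XX - YY)"
  proof -
    have "YY ^ q * XX - YY = YY * (YY ^ (q - 1) * XX - 1)" unfolding id7 yq[symmetric] by (simp only: mult.assoc)
    then have "YY ^ q * XX - YY = YY * ?G" unfolding c1 .
    then show ?thesis by (simp only:) (rule pdv_mult_left[OF pdv_self])
  qed
  have hiv: "eqm (int p) (XX ^ (q + 1) - 1) (YY * ?G)"
  proof -
    have "XX ^ (q + 1) - 1 = XX ^ q * XX - 1" by simp
    moreover have "eqm (int p) (XX ^ q * XX - 1) ((YY ^ q - 1) * XX - 1)"
      by (rule eqm_diff[OF eqm_mult[OF eX eqm_refl] eqm_refl])
    moreover have "(YY ^ q - 1) * XX - 1 = YY * ?G"
    proof -
      have "(YY ^ q - 1) * XX - 1 = YY ^ q * YY - YY ^ q - YY" unfolding XX_eq by (rule id1)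
      moreover have "YY * ?G = YY * YY ^ q - YY * YY ^ (q - 1) - YY" unfolding Gq_def by (rule id2)
      ultimately show ?thesis unfolding yq by (simp add: mult.commute)
    qed
    ultimately show ?thesis by simp
  qed
  have hi: "pdv (int p) ?G (YY ^ (q * q - 1) - 1)"
  proof -
    have c3: "pdv (int p) ?G ((YY ^ q * XX) ^ q - YY ^ q)" by (rule pdv_power_diff[OF c2])
    have "(YY ^ q * XX) ^ q = YY ^ (q * q) * XX ^ q" by (simp only: power_mult_distrib power_mult)
    then have c3': "pdv (int p) ?G (YY ^ (q * q) * XX ^ q - YY ^ q)" using c3 by simp
    have "eqm (int p) (YY ^ (q * q) * XX ^ q - YY ^ q) (YY ^ (q * q) * (YY ^ q - 1) - YY ^ q)"
      by (rule eqm_diff[OF eqm_mult[OF eqm_refl eX] eqm_refl])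
    then have c5: "pdv (int p) ?G (YY ^ (q * q) * (YY ^ q - 1) - YY ^ q)" using c3' by (rule pdv_eqm)
    have "(YY ^ q - 1) * XX - 1 = YY ^ q * XX - (XX + 1)" by (rule id6)
    also have "XX + 1 = YY" by (rule YY_eq[symmetric])
    finally have c4: "pdv (int p) ?G ((YY ^ q - 1) * XX - 1)" using c2 by simp
    have "pdv (int p) ?G ((- (YY ^ (q * q))) * ((YY ^ q - 1) * XX - 1) + XX * (YY ^ (q * q) * (YY ^ q - 1) - YY ^ q) + (YY ^ q * XX - YY))"
      by (intro pdv_add pdv_mult_left c4 c5 c2)
    then have c6: "pdv (int p) ?G (YY ^ (q * q) - YY)" unfolding id3[symmetric] .
    have qq: "q * q = Suc (q * q - 1)" using q2 by (simp add: Suc_diff_Suc)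
    have "YY ^ (q * q) - YY = YY * (YY ^ (q * q - 1) - 1)"
      by (subst qq) (simp only: power_Suc right_diff_distrib mult_1_right)
    then have c7: "pdv (int p) ?G (YY * (YY ^ (q * q - 1) - 1))" using c6 by simp
    have "YY * (YY ^ (q - 2) * XX) - 1 = ?G" unfolding c1[symmetric] mult.assoc[symmetric] yq2 ..
    then have u: "pdv (int p) ?G (YY * (YY ^ (q - 2) * XX) - 1)" by simp
    show ?thesis by (rule pdv_cancel_unit[OF u c7])
  qed
  have hii: "\<not> pdv (int p) ?G (YY ^ d - 1)" if d: "0 < d" "d < q * q - 1" for d
  proof
    assume dv: "pdv (int p) ?G (YY ^ d - 1)"
    define a where "a = d div q"
    define b where "b = d mod q"
    have dab: "d = q * a + b" unfolding a_def b_def by simp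
    have bq: "b < q" unfolding b_def using q2 by simp
    have aq: "a < q" unfolding a_def using d by (simp add: less_mult_imp_div_less)
    have ca: "pdv (int p) ?G ((YY ^ q * XX) ^ a - YY ^ a)" by (rule pdv_power_diff[OF c2])
    have "(YY ^ q * XX) ^ a = YY ^ (q * a) * XX ^ a" by (simp only: power_mult_distrib power_mult)
    then have ca': "pdv (int p) ?G (YY ^ (q * a) * XX ^ a - YY ^ a)" using ca by simp
    have Yd: "YY ^ d = YY ^ (q * a) * YY ^ b" unfolding dab by (rule power_add)
    have t1: "pdv (int p) ?G (XX ^ a * (YY ^ (q * a) * YY ^ b - 1))"
      using pdv_mult_left[OF dv, of "XX ^ a"] unfolding Yd .
    have t2: "pdv (int p) ?G (YY ^ b * (YY ^ (q * a) * XX ^ a - YY ^ a))" by (rule pdv_mult_left[OF ca'])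
    have "pdv (int p) ?G (XX ^ a * (YY ^ (q * a) * YY ^ b - 1) - YY ^ b * (YY ^ (q * a) * XX ^ a - YY ^ a))"
      by (rule pdv_diff[OF t1 t2])
    then have "pdv (int p) ?G (YY ^ a * YY ^ b - XX ^ a)" unfolding id4[of "XX ^ a" "YY ^ (q * a)" "YY ^ b" "YY ^ a"] by simp
    then have E1: "pdv (int p) ?G (YY ^ (a + b) - XX ^ a)" by (simp add: power_add)
    have one: "\<not> int p dvd 1" "\<not> int p dvd -1" using m1 by auto
    show False
    proof (cases "a + b < q")
      case True
      have "degree (YY ^ (a + b) - XX ^ a) \<le> max (degree (YY ^ (a + b))) (degree ((XX :: int poly) ^ a))"
        by (rule degree_diff_le_max)
      then have deg: "degree (YY ^ (a + b) - XX ^ a) < degree ?G"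
        using True dG degree_YY_pow[of "a + b"] by (simp add: degree_power_eq)
      show False
      proof (cases "a = 0")
        case False
        have "coeff (YY ^ (a + b) - XX ^ a) 0 = 1"
          using False coeff_YY_pow_0[of "a + b"] coeff_XXN[of a 0] by simp
        then show False using no_small[OF p G E1 deg, of 0] one by simp
      next
        case True
        then have b0: "b > 0" using d dab by simp
        have "coeff (YY ^ (a + b) - XX ^ a) b = 1"
          using True b0 coeff_YY_pow_top[of b] coeff_XXN[of a b] by simp
        then show False using no_small[OF p G E1 deg, of b] one by simp
      qed
    next
      case False
      define S where "S = YY ^ (a + b - q)"
      have SZ: "S * YY ^ q = YY ^ (a + b)" unfolding S_def using False by (simp add: power_add[symmetric])
      have t3: "pdv (int p) ?G (XX * (S * YY ^ q - XX ^ a))" unfolding SZ by (rule pdv_mult_left[OF E1])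
      have t4: "pdv (int p) ?G (S * (YY ^ q * XX - YY))" by (rule pdv_mult_left[OF c2])
      have "pdv (int p) ?G (XX * (S * YY ^ q - XX ^ a) - S * (YY ^ q * XX - YY))" by (rule pdv_diff[OF t3 t4])
      then have E2': "pdv (int p) ?G (S * YY - XX * XX ^ a)" unfolding id5 .
      have SY: "S * YY = YY ^ Suc (a + b - q)" unfolding S_def by (simp only: power_Suc2)
      have XA: "XX * XX ^ a = (XX :: int poly) ^ Suc a" by (simp only: power_Suc)
      have E2: "pdv (int p) ?G (YY ^ Suc (a + b - q) - XX ^ Suc a)" using E2' unfolding SY XA .
      show False
      proof (cases "Suc a < q")
        case True
        have lt: "Suc (a + b - q) < q" using True bq False by linarith
        have dA: "degree (YY ^ Suc (a + b - q)) = Suc (a + b - q)" by (rule degree_YY_pow)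
        have dB: "degree ((XX :: int poly) ^ Suc a) = Suc a" by (simp add: degree_power_eq)
        have mx: "max (degree (YY ^ Suc (a + b - q))) (degree ((XX :: int poly) ^ Suc a)) < q"
          unfolding dA dB using True lt by simp
        have deg: "degree (YY ^ Suc (a + b - q) - XX ^ Suc a) < degree ?G"
          using le_less_trans[OF degree_diff_le_max mx] dG by simp
        have "coeff (YY ^ Suc (a + b - q) - XX ^ Suc a) 0 = 1"
          using coeff_YY_pow_0[of "Suc (a + b - q)"] coeff_XXN[of "Suc a" 0] by simp
        then show False using no_small[OF p G E2 deg, of 0] one by simp
      next
        case False2: False
        then have aq1: "Suc a = q" using aq by simp
        have b1: "b \<ge> 1" using False aq1 by simp
        have sb: "Suc (a + b - q) = b" using aq1 b1 by simp
        have "q * a = q * q - q" using aq1 by (metis diff_Suc_1 diff_mult_distrib2 mult.right_neutral)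
        moreover have "q * q \<ge> q" by simp
        ultimately have bq1: "b < q - 1" using d dab by linarith
        have E3: "pdv (int p) ?G (YY ^ b - XX ^ q)" using E2 unfolding sb aq1 .
        have "eqm (int p) (YY ^ b - XX ^ q) (YY ^ b - (YY ^ q - 1))" by (rule eqm_diff[OF eqm_refl eX])
        then have E4: "pdv (int p) ?G (YY ^ b - (YY ^ q - 1))" using E3 by (rule pdv_eqm)
        have E4': "pdv (int p) ?G ((YY ^ b - (YY ^ q - 1)) + ?G)" by (rule pdv_add[OF E4 pdv_self])
        have eqG: "(YY ^ b - (YY ^ q - 1)) + ?G = YY ^ b - YY ^ (q - 1)" unfolding Gq_def by simp
        have E5: "pdv (int p) ?G (YY ^ b - YY ^ (q - 1))" using E4' unfolding eqG .
        have "degree (YY ^ b - YY ^ (q - 1)) \<le> max (degree (YY ^ b)) (degree (YY ^ (q - 1)))"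
          by (rule degree_diff_le_max)
        then have deg: "degree (YY ^ b - YY ^ (q - 1)) < degree ?G"
          using dG bq q2 degree_YY_pow[of b] degree_YY_pow[of "q - 1"] by simp
        have "coeff (YY ^ b - YY ^ (q - 1)) (q - 1) = -1"
          using coeff_YY_pow_above[of b "q - 1"] coeff_YY_pow_top[of "q - 1"] bq1 by simp
        then show False using no_small[OF p G E5 deg, of "q - 1"] one by simp
      qed
    qed
  qed
  have hii': "\<forall>d. 0 < d \<and> d < q * q - 1 \<longrightarrow> \<not> pdv (int p) ?G (YY ^ d - 1)" using hii by blast
  have dG0: "degree ?G > 0" using dG q2 by simp
  have qq0: "q * q - 1 > 0"
  proof -
    have "q * q \<ge> 2 * 2" using mult_le_mono[OF q2 q2] .
    then show ?thesis by simp
  qed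
  have nd: "\<not> p dvd (q * q - 1)"
  proof
    assume "p dvd (q * q - 1)"
    moreover have "p dvd q * q" unfolding q_def using n by (simp add: dvd_power)
    ultimately have "p dvd (q * q - (q * q - 1))" by (simp add: dvd_diff_nat)
    moreover have "q * q - (q * q - 1) = 1" using qq0 by simp
    ultimately show False using p1 by simp
  qed
  have q11: "q + 1 \<ge> 1" by simp
  show ?thesis by (intro conjI G dG0 qq0 nd hi hii' q11 hiv)
qed

theorem proposition7p4:
  fixes p k n :: nat
  assumes "prime p" and "n \<ge> 1" and "p = 2 \<longrightarrow> n > 1"
  shows "Pmax p (p ^ k * (p ^ n - 1)) = p ^ k * (p ^ n - 1) \<and>
         Pmax p (p ^ k * (p ^ n + 1)) = p ^ k * (p ^ (2 * n) - 1)"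
proof
  have P1: "monic (Phi (p ^ n - 1)) \<and> degree (Phi (p ^ n - 1)) > 0 \<and> p ^ n - 1 > 0 \<and> \<not> p dvd (p ^ n - 1)
    \<and> pdv (int p) (Phi (p ^ n - 1)) (YY ^ (p ^ n - 1) - 1)
    \<and> (\<forall>d. 0 < d \<and> d < p ^ n - 1 \<longrightarrow> \<not> pdv (int p) (Phi (p ^ n - 1)) (YY ^ d - 1))
    \<and> p ^ n - 1 \<ge> 1
    \<and> eqm (int p) (XX ^ (p ^ n - 1) - 1) (YY * Phi (p ^ n - 1))"
    using part1_H[OF assms] by simp
  show "Pmax p (p ^ k * (p ^ n - 1)) = p ^ k * (p ^ n - 1)"
    by (rule pmax_from_H) (use P1 assms(1) in auto)
next
  have P2: "monic (Gq (p ^ n)) \<and> degree (Gq (p ^ n)) > 0 \<and> p ^ n * p ^ n - 1 > 0 \<and> \<not> p dvd (p ^ n * p ^ n - 1)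
    \<and> pdv (int p) (Gq (p ^ n)) (YY ^ (p ^ n * p ^ n - 1) - 1)
    \<and> (\<forall>d. 0 < d \<and> d < p ^ n * p ^ n - 1 \<longrightarrow> \<not> pdv (int p) (Gq (p ^ n)) (YY ^ d - 1))
    \<and> p ^ n + 1 \<ge> 1
    \<and> eqm (int p) (XX ^ (p ^ n + 1) - 1) (YY * Gq (p ^ n))"
    using part2_G[OF assms(1,2)] by simp
  have "Pmax p (p ^ k * (p ^ n + 1)) = p ^ k * (p ^ n * p ^ n - 1)"
    by (rule pmax_from_H) (use P2 assms(1) in auto)
  moreover have "p ^ (2 * n) = p ^ n * p ^ n" by (simp add: mult_2 power_add)
  ultimately show "Pmax p (p ^ k * (p ^ n + 1)) = p ^ k * (p ^ (2 * n) - 1)" by simp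
qed

end
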